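(* Let $\mathcal{P}$ be a finite nonempty set of stochastic trees and $\Pi$ any partition of $S_\mathcal{P}$ in which the start states of all trees in $\mathcal{P}$ lie in the same class. Then $P \preceq \mathcal{P}/\Pi$ for every $P \in \mathcal{P}$.
   Context: An LPTS is a tuple $\langle S,s^0,\alpha,\tau\rangle$ with finite state set $S$, start state $s^0$, finite action set $\alpha$, finite $\tau\subseteq S\times\alpha\times\mathrm{Dist}(S)$, where $\mathrm{Dist}(S)$ is the set of discrete probability distributions over $S$ (rational probabilities); write $s\xrightarrow{a}\mu$. A stochastic tree is an LPTS whose start state is in the support of no transition's distribution and every other state is in the support of exactly one transition's distribution. Strong simulation: for $\mu_1\in\mathrm{Dist}(S_1)$, $\mu_2\in\mathrm{Dist}(S_2)$, $R\subseteq S_1\times S_2$, $\mu_1\sqsubseteq_R\mu_2$ iff there is $w:S_1\times S_2\to\mathbb{Q}\cap[0,1]$ with $\sum_{s_2}w(s_1,s_2)=\mu_1(s_1)$, $\sum_{s_1}w(s_1,s_2)=\mu_2(s_2)$ and $w(s_1,s_2)>0\Rightarrow s_1Rs_2$; $R$ is a strong simulation iff $s_1Rs_2$ and $s_1\xrightarrow{a}\mu_1$ imply some $s_2\xrightarrow{a}\mu_2$ with $\mu_1\sqsubseteq_R\mu_2$; $L_1\preceq L_2$ iff a strong simulation relates the start states. $S_\mathcal{P}$ is the (disjoint) union of the state sets of the trees in $\mathcal{P}$. For a partition $\Pi$ of $S_\mathcal{P}$ with classes $E_\Pi$ and class $[s]$ of $s$, the quotient $\mathcal{P}/\Pi$ is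 the LPTS with states $E_\Pi$, start state the common class of the start states, actions $\bigcup_{P\in\mathcal{P}}\alpha_P$, and a transition $e\xrightarrow{a}\mu$ iff some tree $P\in\mathcal{P}$ has a transition $s\xrightarrow{a}\mu_p$ with $[s]=e$ and $\mu(e')=\sum_{s'\in e'}\mu_p(s')$ for all $e'\in E_\Pi$. *)

theory Defs
  imports Complex_Main "HOL-Library.Disjoint_Sets"
begin

record ('s, 'a) lpts =
  states :: "'s set"
  start  :: 's
  acts   :: "'a set"
  trans  :: "('s \<times> 'a \<times> ('s \<Rightarrow> rat)) set"

definition is_dist :: "'s set \<Rightarrow> ('s \<Rightarrow> rat) \<Rightarrow> bool" where
  "is_dist S \<mu> \<longleftrightarrow> (\<forall>s. 0 \<le> \<mu> s) \<and> (\<forall>s. s \<notin> S \<longrightarrow> \<mu> s = 0) \<and> (\<Sum>s\<in>S. \<mu> s) = 1"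

definition is_lpts :: "('s, 'a) lpts \<Rightarrow> bool" where
  "is_lpts L \<longleftrightarrow> finite (states L) \<and> start L \<in> states L \<and> finite (acts L) \<and> finite (trans L)
     \<and> (\<forall>(s, a, \<mu>) \<in> trans L. s \<in> states L \<and> a \<in> acts L \<and> is_dist (states L) \<mu>)"

definition stochastic_tree :: "('s, 'a) lpts \<Rightarrow> bool" where
  "stochastic_tree L \<longleftrightarrow> is_lpts L
     \<and> (\<forall>(s, a, \<mu>) \<in> trans L. \<mu> (start L) = 0)
     \<and> (\<forall>t \<in> states L - {start L}. card {(s, a, \<mu>) \<in> trans L. 0 < \<mu> t} = 1)"

definition lift_rel :: "'s1 set \<Rightarrow> 's2 set \<Rightarrow> ('s1 \<times> 's2) set \<Rightarrow> ('s1 \<Rightarrow> rat) \<Rightarrow> ('s2 \<Rightarrow> rat) \<Rightarrow> bool" where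
  "lift_rel S1 S2 R \<mu>1 \<mu>2 \<longleftrightarrow> (\<exists>w :: 's1 \<Rightarrow> 's2 \<Rightarrow> rat.
       (\<forall>x y. 0 \<le> w x y \<and> w x y \<le> 1)
     \<and> (\<forall>x\<in>S1. (\<Sum>y\<in>S2. w x y) = \<mu>1 x)
     \<and> (\<forall>y\<in>S2. (\<Sum>x\<in>S1. w x y) = \<mu>2 y)
     \<and> (\<forall>x y. 0 < w x y \<longrightarrow> (x, y) \<in> R))"

definition strong_simulation :: "('s1, 'a) lpts \<Rightarrow> ('s2, 'a) lpts \<Rightarrow> ('s1 \<times> 's2) set \<Rightarrow> bool" where
  "strong_simulation L1 L2 R \<longleftrightarrow> R \<subseteq> states L1 \<times> states L2 \<and>
     (\<forall>(s1, s2) \<in> R. \<forall>a \<mu>1. (s1, a, \<mu>1) \<in> trans L1 \<longrightarrow>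
        (\<exists>\<mu>2. (s2, a, \<mu>2) \<in> trans L2 \<and> lift_rel (states L1) (states L2) R \<mu>1 \<mu>2))"

definition simulated :: "('s1, 'a) lpts \<Rightarrow> ('s2, 'a) lpts \<Rightarrow> bool" (infix "\<preceq>\<^sub>s" 50) where
  "L1 \<preceq>\<^sub>s L2 \<longleftrightarrow> (\<exists>R. strong_simulation L1 L2 R \<and> (start L1, start L2) \<in> R)"

text \<open>Disjoint union of the state sets: states tagged with the tree they belong to.\<close>
definition union_states :: "('s, 'a) lpts set \<Rightarrow> (('s, 'a) lpts \<times> 's) set" where
  "union_states Ps = {(P, s). P \<in> Ps \<and> s \<in> states P}"

definition cls :: "'x set set \<Rightarrow> 'x \<Rightarrow> 'x set" where
  "cls Part x = (THE e. e \<in> Part \<and> x \<in> e)"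

definition lift_dist :: "(('s, 'a) lpts \<times> 's) set set \<Rightarrow> ('s, 'a) lpts \<Rightarrow> ('s \<Rightarrow> rat)
    \<Rightarrow> (('s, 'a) lpts \<times> 's) set \<Rightarrow> rat" where
  "lift_dist Part P \<mu> e = (if e \<in> Part then (\<Sum>s'\<in>{s' \<in> states P. (P, s') \<in> e}. \<mu> s') else 0)"

definition quot_lpts :: "('s, 'a) lpts set \<Rightarrow> (('s, 'a) lpts \<times> 's) set set
    \<Rightarrow> ((('s, 'a) lpts \<times> 's) set, 'a) lpts" where
  "quot_lpts Ps Part = \<lparr> states = Part,
     start = cls Part (let P = (SOME P. P \<in> Ps) in (P, start P)),
     acts = (\<Union>P\<in>Ps. acts P),
     trans = {(e, a, \<mu>). \<exists>P\<in>Ps. \<exists>s \<mu>p. (s, a, \<mu>p) \<in> trans P \<and> cls Part (P, s) = e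
                                  \<and> \<mu> = lift_dist Part P \<mu>p} \<rparr>"

end

theory Submission
  imports Defs
begin

lemma part_uniq:
  assumes "partition_on A Part" "e \<in> Part" "e' \<in> Part" "x \<in> e" "x \<in> e'"
  shows "e' = e"
proof (rule ccontr)
  assume "e' \<noteq> e"
  hence "e' \<inter> e = {}" using disjointD[OF partition_onD2[OF assms(1)] assms(3,2)] by blast
  thus False using assms(4,5) by blast
qed

lemma cls_props:
  assumes "partition_on A Part" "x \<in> A"
  shows "cls Part x \<in> Part \<and> x \<in> cls Part x"
proof -
  have "x \<in> \<Union>Part" using partition_onD1[OF assms(1)] assms(2) by simp
  then obtain e where e: "e \<in> Part" "x \<in> e" by blast
  have u: "\<And>e'. e' \<in> Part \<and> x \<in> e' \<Longrightarrow> e' = e"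
    using part_uniq[OF assms(1) e(1)] e(2) by blast
  have "cls Part x = e" unfolding cls_def
    by (rule the_equality) (use e u in blast)+
  thus ?thesis using e by simp
qed

lemma cls_eq:
  assumes "partition_on A Part" "e \<in> Part" "x \<in> e"
  shows "cls Part x = e"
proof -
  have xA: "x \<in> A" using partition_onD1[OF assms(1)] assms(2,3) by blast
  have c: "cls Part x \<in> Part" "x \<in> cls Part x" using cls_props[OF assms(1) xA] by auto
  show ?thesis using part_uniq[OF assms(1) assms(2) c(1) assms(3) c(2)] .
qed

theorem lemma6:
  fixes Ps :: "('s, 'a) lpts set" and Part :: "(('s, 'a) lpts \<times> 's) set set"
  assumes "finite Ps" and "Ps \<noteq> {}"
    and "\<forall>P\<in>Ps. stochastic_tree P"
    and "partition_on (union_states Ps) Part"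
    and "\<exists>e\<in>Part. \<forall>P\<in>Ps. (P, start P) \<in> e"
  shows "\<forall>P\<in>Ps. P \<preceq>\<^sub>s quot_lpts Ps Part"
proof
  fix P assume P: "P \<in> Ps"
  have lp: "\<And>Q. Q \<in> Ps \<Longrightarrow> is_lpts Q" using assms(3) by (auto simp: stochastic_tree_def)
  have finU: "finite (union_states Ps)"
  proof -
    have "union_states Ps \<subseteq> (\<Union>Q\<in>Ps. (\<lambda>s. (Q, s)) ` states Q)"
      unfolding union_states_def by auto
    moreover have "finite (\<Union>Q\<in>Ps. (\<lambda>s. (Q, s)) ` states Q)"
      using assms(1) lp by (auto simp: is_lpts_def)
    ultimately show ?thesis by (rule finite_subset)
  qed
  have finPart: "finite Part"
    using assms(4) finU by (metis finite_UnionD partition_on_def)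
  have inU: "\<And>s. s \<in> states P \<Longrightarrow> (P, s) \<in> union_states Ps"
    using P by (auto simp: union_states_def)
  define R where "R = {(s, cls Part (P, s)) | s. s \<in> states P}"
  have step: "\<exists>\<mu>2. (cls Part (P, s), a, \<mu>2) \<in> trans (quot_lpts Ps Part) \<and>
            lift_rel (states P) (states (quot_lpts Ps Part)) R \<mu>1 \<mu>2"
    if s: "s \<in> states P" and tr: "(s, a, \<mu>1) \<in> trans P" for s a \<mu>1
  proof -
    have d: "is_dist (states P) \<mu>1" using lp[OF P] tr by (auto simp: is_lpts_def)
    have finS: "finite (states P)" using lp[OF P] by (simp add: is_lpts_def)
    let ?\<mu>2 = "lift_dist Part P \<mu>1"
    have t2: "(cls Part (P, s), a, ?\<mu>2) \<in> trans (quot_lpts Ps Part)"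
      using P tr unfolding quot_lpts_def by auto
    have le1: "\<And>x. \<mu>1 x \<le> 1"
    proof -
      fix x
      show "\<mu>1 x \<le> 1"
      proof (cases "x \<in> states P")
        case True
        have "\<mu>1 x \<le> (\<Sum>s\<in>states P. \<mu>1 s)"
          using d True finS by (intro member_le_sum) (auto simp: is_dist_def)
        thus ?thesis using d by (simp add: is_dist_def)
      next
        case False thus ?thesis using d by (simp add: is_dist_def)
      qed
    qed
    define w where "w x y = (if x \<in> states P \<and> y = cls Part (P, x) then \<mu>1 x else 0)" for x y
    have "lift_rel (states P) (states (quot_lpts Ps Part)) R \<mu>1 ?\<mu>2"
      unfolding lift_rel_def
    proof (intro exI[of _ w] conjI allI ballI impI)
      fix x y show "0 \<le> w x y" using d by (simp add: w_def is_dist_def)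
      show "w x y \<le> 1" using le1 by (simp add: w_def)
    next
      fix x assume x: "x \<in> states P"
      have c: "cls Part (P, x) \<in> Part" using cls_props[OF assms(4) inU[OF x]] by simp
      have "(\<Sum>y\<in>Part. w x y) = (\<Sum>y\<in>Part. if y = cls Part (P, x) then \<mu>1 x else 0)"
        using x by (intro sum.cong) (auto simp: w_def)
      also have "\<dots> = \<mu>1 x" using finPart c by (simp add: sum.delta')
      finally show "(\<Sum>y\<in>states (quot_lpts Ps Part). w x y) = \<mu>1 x"
        by (simp add: quot_lpts_def)
    next
      fix y assume "y \<in> states (quot_lpts Ps Part)"
      hence y: "y \<in> Part" by (simp add: quot_lpts_def)
      have eq: "\<And>x. x \<in> states P \<Longrightarrow> (y = cls Part (P, x)) = ((P, x) \<in> y)"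
        using cls_props[OF assms(4) inU] cls_eq[OF assms(4) y] by metis
      have "(\<Sum>x\<in>states P. w x y) = (\<Sum>x\<in>states P. if (P, x) \<in> y then \<mu>1 x else 0)"
        using eq by (intro sum.cong) (auto simp: w_def)
      also have "\<dots> = (\<Sum>x\<in>{s' \<in> states P. (P, s') \<in> y}. \<mu>1 x)"
        using finS by (simp add: sum.inter_filter)
      also have "\<dots> = ?\<mu>2 y" using y by (simp add: lift_dist_def)
      finally show "(\<Sum>x\<in>states P. w x y) = ?\<mu>2 y" .
    next
      fix x y assume "0 < w x y"
      thus "(x, y) \<in> R" by (auto simp: w_def R_def split: if_splits)
    qed
    thus ?thesis using t2 by blast
  qed
  have sim: "strong_simulation P (quot_lpts Ps Part) R"
    unfolding strong_simulation_def
  proof (intro conjI)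
    show "R \<subseteq> states P \<times> states (quot_lpts Ps Part)"
      using cls_props[OF assms(4) inU] by (auto simp: R_def quot_lpts_def)
    show "\<forall>(s1, s2)\<in>R. \<forall>a \<mu>1. (s1, a, \<mu>1) \<in> trans P \<longrightarrow>
        (\<exists>\<mu>2. (s2, a, \<mu>2) \<in> trans (quot_lpts Ps Part) \<and>
          lift_rel (states P) (states (quot_lpts Ps Part)) R \<mu>1 \<mu>2)"
    proof (intro ballI)
      fix p assume pR: "p \<in> R"
      then obtain s where p: "p = (s, cls Part (P, s))" and s: "s \<in> states P"
        by (auto simp: R_def)
      show "case p of (s1, s2) \<Rightarrow> \<forall>a \<mu>1. (s1, a, \<mu>1) \<in> trans P \<longrightarrow>
        (\<exists>\<mu>2. (s2, a, \<mu>2) \<in> trans (quot_lpts Ps Part) \<and>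
          lift_rel (states P) (states (quot_lpts Ps Part)) R \<mu>1 \<mu>2)"
        using step[OF s] p by simp
    qed
  qed
  obtain e where e: "e \<in> Part" "\<forall>Q\<in>Ps. (Q, start Q) \<in> e" using assms(5) by blast
  define P0 where "P0 = (SOME P. P \<in> Ps)"
  have P0: "P0 \<in> Ps" using assms(2) unfolding P0_def by (auto intro: someI)
  have c0: "cls Part (P0, start P0) = e" using cls_eq[OF assms(4) e(1)] e(2) P0 by blast
  have st: "start (quot_lpts Ps Part) = e"
    unfolding quot_lpts_def P0_def[symmetric] Let_def using c0 by simp
  have sP: "start P \<in> states P" using lp[OF P] by (simp add: is_lpts_def)
  have cP: "cls Part (P, start P) = e" using cls_eq[OF assms(4) e(1)] e(2) P by blast
  have "(start P, cls Part (P, start P)) \<in> R" unfolding R_def using sP by blast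
  hence st2: "(start P, start (quot_lpts Ps Part)) \<in> R" unfolding st cP .
  show "P \<preceq>\<^sub>s quot_lpts Ps Part" unfolding simulated_def
    by (rule exI[of _ R], rule conjI[OF sim st2])
qed

end
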